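(* Let $\mathfrak g$ be a Lie algebra with a Cartan subalgebra $\mathfrak h$ and a root decomposition with roots $\Delta$. Every $\mathbb R$-linear order $>$ on $\langle\Delta\rangle_{\mathbb R}$ determines a unique Borel subalgebra, namely $\mathfrak h\oplus\bigoplus_{\alpha\in\Delta^+}\mathfrak g^\alpha$ with $\Delta^\pm:=\{\alpha\in\Delta:\pm\alpha>0\}$; conversely, every Borel subalgebra of $\mathfrak g$ (containing $\mathfrak h$) is determined in this way by some (in general not unique) $\mathbb R$-linear order on $\langle\Delta\rangle_{\mathbb R}$.
   Context: Over $\mathbb C$. A Cartan subalgebra is a self-normalizing nilpotent subalgebra $\mathfrak h$; a root decomposition is $\mathfrak g=\mathfrak h\oplus\bigoplus_{\alpha\in\mathfrak h^*\setminus\{0\}}\mathfrak g^\alpha$ with $\mathfrak g^\alpha$ the generalized weight spaces, $\Delta=\{\alpha\ne0:\mathfrak g^\alpha\ne0\}$, and $\langle\Delta\rangle_{\mathbb R}$ the real span of $\Delta$ in $\mathfrak h^*$. A decomposition $\Delta=\Delta^+\sqcup\Delta^-$ is triangular if the cone $\langle\Delta^+\cup-\Delta^-\rangle_{\mathbb R_+}$ contains no nonzero real vector subspace; a Borel subalgebra is $\mathfrak h\oplus\bigoplus_{\alpha\in\Delta^+}\mathfrak g^\alpha$ for a triangular decomposition. An $\mathbb R$-linear order on a real vector space is a total order compatible with addition and with multiplication by positive reals (multiplication by negative reals reversing it). *)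

theory Defs
  imports "HOL-Analysis.Analysis"
begin

definition lie_algebra :: "(complex \<Rightarrow> 'g::ab_group_add \<Rightarrow> 'g) \<Rightarrow> ('g \<Rightarrow> 'g \<Rightarrow> 'g) \<Rightarrow> bool" where
  "lie_algebra smul br \<longleftrightarrow> vector_space smul
     \<and> (\<forall>x y z. br (x + y) z = br x z + br y z)
     \<and> (\<forall>x y z. br x (y + z) = br x y + br x z)
     \<and> (\<forall>c x y. br (smul c x) y = smul c (br x y))
     \<and> (\<forall>c x y. br x (smul c y) = smul c (br x y))
     \<and> (\<forall>x. br x x = 0)
     \<and> (\<forall>x y z. br x (br y z) + br y (br z x) + br z (br x y) = 0)"

fun lower_central :: "(complex \<Rightarrow> 'g::ab_group_add \<Rightarrow> 'g) \<Rightarrow> ('g \<Rightarrow> 'g \<Rightarrow> 'g) \<Rightarrow> 'g set \<Rightarrow> nat \<Rightarrow> 'g set" where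
  "lower_central smul br H 0 = H"
| "lower_central smul br H (Suc k) =
     module.span smul {br x y | x y. x \<in> H \<and> y \<in> lower_central smul br H k}"

definition lie_subalgebra :: "(complex \<Rightarrow> 'g::ab_group_add \<Rightarrow> 'g) \<Rightarrow> ('g \<Rightarrow> 'g \<Rightarrow> 'g) \<Rightarrow> 'g set \<Rightarrow> bool" where
  "lie_subalgebra smul br H \<longleftrightarrow> module.subspace smul H \<and> (\<forall>x\<in>H. \<forall>y\<in>H. br x y \<in> H)"

definition nilpotent_subalgebra :: "(complex \<Rightarrow> 'g::ab_group_add \<Rightarrow> 'g) \<Rightarrow> ('g \<Rightarrow> 'g \<Rightarrow> 'g) \<Rightarrow> 'g set \<Rightarrow> bool" where
  "nilpotent_subalgebra smul br H \<longleftrightarrow> lie_subalgebra smul br H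
     \<and> (\<exists>n. lower_central smul br H n = {0})"

definition normalizer :: "('g \<Rightarrow> 'g \<Rightarrow> 'g) \<Rightarrow> 'g set \<Rightarrow> 'g set" where
  "normalizer br H = {x. \<forall>y\<in>H. br x y \<in> H}"

definition cartan_subalgebra :: "(complex \<Rightarrow> 'g::ab_group_add \<Rightarrow> 'g) \<Rightarrow> ('g \<Rightarrow> 'g \<Rightarrow> 'g) \<Rightarrow> 'g set \<Rightarrow> bool" where
  "cartan_subalgebra smul br H \<longleftrightarrow> nilpotent_subalgebra smul br H \<and> normalizer br H = H"

text \<open>The dual space h^*: complex-linear functionals on H, represented as functions
  on 'g that vanish outside H (so that equality of functionals is equality of functions).\<close>
definition hdual :: "(complex \<Rightarrow> 'g::ab_group_add \<Rightarrow> 'g) \<Rightarrow> 'g set \<Rightarrow> ('g \<Rightarrow> complex) set" where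
  "hdual smul H = {\<alpha>. (\<forall>x\<in>H. \<forall>y\<in>H. \<alpha> (x + y) = \<alpha> x + \<alpha> y)
                     \<and> (\<forall>c. \<forall>x\<in>H. \<alpha> (smul c x) = c * \<alpha> x)
                     \<and> (\<forall>x. x \<notin> H \<longrightarrow> \<alpha> x = 0)}"

definition gen_weight_space :: "(complex \<Rightarrow> 'g::ab_group_add \<Rightarrow> 'g) \<Rightarrow> ('g \<Rightarrow> 'g \<Rightarrow> 'g) \<Rightarrow> 'g set
     \<Rightarrow> ('g \<Rightarrow> complex) \<Rightarrow> 'g set" where
  "gen_weight_space smul br H \<alpha> =
     {x. \<forall>h\<in>H. \<exists>n. ((\<lambda>z. br h z - smul (\<alpha> h) z) ^^ n) x = 0}"

definition roots :: "(complex \<Rightarrow> 'g::ab_group_add \<Rightarrow> 'g) \<Rightarrow> ('g \<Rightarrow> 'g \<Rightarrow> 'g) \<Rightarrow> 'g set \<Rightarrow> ('g \<Rightarrow> complex) set" where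
  "roots smul br H = {\<alpha> \<in> hdual smul H. \<alpha> \<noteq> (\<lambda>_. 0) \<and> gen_weight_space smul br H \<alpha> \<noteq> {0}}"

definition root_decomposition :: "(complex \<Rightarrow> 'g::ab_group_add \<Rightarrow> 'g) \<Rightarrow> ('g \<Rightarrow> 'g \<Rightarrow> 'g) \<Rightarrow> 'g set \<Rightarrow> bool" where
  "root_decomposition smul br H \<longleftrightarrow>
     (\<forall>x. \<exists>x0 S v. x0 \<in> H \<and> finite S \<and> S \<subseteq> hdual smul H - {\<lambda>_. 0}
          \<and> (\<forall>\<alpha>\<in>S. v \<alpha> \<in> gen_weight_space smul br H \<alpha>) \<and> x = x0 + (\<Sum>\<alpha>\<in>S. v \<alpha>))
   \<and> (\<forall>x0 S v. x0 \<in> H \<and> finite S \<and> S \<subseteq> hdual smul H - {\<lambda>_. 0}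
          \<and> (\<forall>\<alpha>\<in>S. v \<alpha> \<in> gen_weight_space smul br H \<alpha>) \<and> x0 + (\<Sum>\<alpha>\<in>S. v \<alpha>) = 0
          \<longrightarrow> x0 = 0 \<and> (\<forall>\<alpha>\<in>S. v \<alpha> = 0))"

definition rcomb :: "('g \<Rightarrow> complex) set \<Rightarrow> (('g \<Rightarrow> complex) \<Rightarrow> real) \<Rightarrow> 'g \<Rightarrow> complex" where
  "rcomb S c = (\<lambda>x. \<Sum>\<alpha>\<in>S. complex_of_real (c \<alpha>) * \<alpha> x)"

definition real_span :: "('g \<Rightarrow> complex) set \<Rightarrow> ('g \<Rightarrow> complex) set" where
  "real_span A = {rcomb S c | S c. finite S \<and> S \<subseteq> A}"

definition real_cone :: "('g \<Rightarrow> complex) set \<Rightarrow> ('g \<Rightarrow> complex) set" where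
  "real_cone A = {rcomb S c | S c. finite S \<and> S \<subseteq> A \<and> (\<forall>\<alpha>\<in>S. c \<alpha> \<ge> 0)}"

definition real_subspace_fn :: "('g \<Rightarrow> complex) set \<Rightarrow> bool" where
  "real_subspace_fn V \<longleftrightarrow> (\<lambda>_. 0) \<in> V \<and> (\<forall>u\<in>V. \<forall>w\<in>V. (\<lambda>x. u x + w x) \<in> V)
     \<and> (\<forall>r::real. \<forall>u\<in>V. (\<lambda>x. complex_of_real r * u x) \<in> V)"

definition triangular :: "(complex \<Rightarrow> 'g::ab_group_add \<Rightarrow> 'g) \<Rightarrow> ('g \<Rightarrow> 'g \<Rightarrow> 'g) \<Rightarrow> 'g set
     \<Rightarrow> ('g \<Rightarrow> complex) set \<Rightarrow> ('g \<Rightarrow> complex) set \<Rightarrow> bool" where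
  "triangular smul br H P N \<longleftrightarrow>
     P \<union> N = roots smul br H \<and> P \<inter> N = {}
     \<and> (\<forall>V. real_subspace_fn V \<and> V \<subseteq> real_cone (P \<union> (\<lambda>\<alpha> x. - \<alpha> x) ` N) \<longrightarrow> V \<subseteq> {\<lambda>_. 0})"

text \<open>The subalgebra h \<oplus> \<Oplus>_{\<alpha>\<in>P} g^\<alpha> (the sum is direct by the root decomposition).\<close>
definition borel_of :: "(complex \<Rightarrow> 'g::ab_group_add \<Rightarrow> 'g) \<Rightarrow> ('g \<Rightarrow> 'g \<Rightarrow> 'g) \<Rightarrow> 'g set
     \<Rightarrow> ('g \<Rightarrow> complex) set \<Rightarrow> 'g set" where
  "borel_of smul br H P = module.span smul (H \<union> \<Union> (gen_weight_space smul br H ` P))"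

definition borel_subalgebra :: "(complex \<Rightarrow> 'g::ab_group_add \<Rightarrow> 'g) \<Rightarrow> ('g \<Rightarrow> 'g \<Rightarrow> 'g) \<Rightarrow> 'g set
     \<Rightarrow> 'g set \<Rightarrow> bool" where
  "borel_subalgebra smul br H B \<longleftrightarrow>
     (\<exists>P N. triangular smul br H P N \<and> B = borel_of smul br H P)"

definition real_linear_order :: "('g \<Rightarrow> complex) set \<Rightarrow> (('g \<Rightarrow> complex) \<Rightarrow> ('g \<Rightarrow> complex) \<Rightarrow> bool) \<Rightarrow> bool" where
  "real_linear_order E le \<longleftrightarrow>
     (\<forall>a b. le a b \<longrightarrow> a \<in> E \<and> b \<in> E)
     \<and> (\<forall>a\<in>E. le a a)
     \<and> (\<forall>a\<in>E. \<forall>b\<in>E. le a b \<and> le b a \<longrightarrow> a = b)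
     \<and> (\<forall>a\<in>E. \<forall>b\<in>E. \<forall>c\<in>E. le a b \<and> le b c \<longrightarrow> le a c)
     \<and> (\<forall>a\<in>E. \<forall>b\<in>E. le a b \<or> le b a)
     \<and> (\<forall>a\<in>E. \<forall>b\<in>E. \<forall>c\<in>E. le a b \<longrightarrow> le (\<lambda>x. a x + c x) (\<lambda>x. b x + c x))
     \<and> (\<forall>a\<in>E. \<forall>b\<in>E. \<forall>r::real. r > 0 \<and> le a b \<longrightarrow>
           le (\<lambda>x. complex_of_real r * a x) (\<lambda>x. complex_of_real r * b x))
     \<and> (\<forall>a\<in>E. \<forall>b\<in>E. \<forall>r::real. r < 0 \<and> le a b \<longrightarrow>
           le (\<lambda>x. complex_of_real r * b x) (\<lambda>x. complex_of_real r * a x))"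

definition pos_roots :: "(complex \<Rightarrow> 'g::ab_group_add \<Rightarrow> 'g) \<Rightarrow> ('g \<Rightarrow> 'g \<Rightarrow> 'g) \<Rightarrow> 'g set
     \<Rightarrow> (('g \<Rightarrow> complex) \<Rightarrow> ('g \<Rightarrow> complex) \<Rightarrow> bool) \<Rightarrow> ('g \<Rightarrow> complex) set" where
  "pos_roots smul br H le = {\<alpha> \<in> roots smul br H. le (\<lambda>_. 0) \<alpha> \<and> \<alpha> \<noteq> (\<lambda>_. 0)}"

definition neg_roots :: "(complex \<Rightarrow> 'g::ab_group_add \<Rightarrow> 'g) \<Rightarrow> ('g \<Rightarrow> 'g \<Rightarrow> 'g) \<Rightarrow> 'g set
     \<Rightarrow> (('g \<Rightarrow> complex) \<Rightarrow> ('g \<Rightarrow> complex) \<Rightarrow> bool) \<Rightarrow> ('g \<Rightarrow> complex) set" where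
  "neg_roots smul br H le = {\<alpha> \<in> roots smul br H. le \<alpha> (\<lambda>_. 0) \<and> \<alpha> \<noteq> (\<lambda>_. 0)}"

end

theory Submission
  imports Defs
begin

definition cone_fn :: "('g \<Rightarrow> complex) set \<Rightarrow> bool" where
  "cone_fn K \<longleftrightarrow> (\<lambda>_. 0) \<in> K \<and> (\<forall>u\<in>K. \<forall>w\<in>K. (\<lambda>x. u x + w x) \<in> K)
     \<and> (\<forall>r::real. r \<ge> 0 \<longrightarrow> (\<forall>u\<in>K. (\<lambda>x. complex_of_real r * u x) \<in> K))"

lemma rcomb_empty: "rcomb {} c = (\<lambda>_. 0)"
  by (simp add: rcomb_def)

lemma rcomb_insert: "finite S \<Longrightarrow> a \<notin> S \<Longrightarrow>
   rcomb (insert a S) c = (\<lambda>x. complex_of_real (c a) * a x + rcomb S c x)"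
  by (simp add: rcomb_def)

lemma rcomb_ext: "finite T \<Longrightarrow> S \<subseteq> T \<Longrightarrow> rcomb S c = rcomb T (\<lambda>\<alpha>. if \<alpha> \<in> S then c \<alpha> else 0)"
  unfolding rcomb_def
proof (rule ext)
  fix x assume T: "finite T" and ST: "S \<subseteq> T"
  have "(\<Sum>\<alpha>\<in>T. complex_of_real (if \<alpha> \<in> S then c \<alpha> else 0) * \<alpha> x)
     = (\<Sum>\<alpha>\<in>T. if \<alpha> \<in> S then complex_of_real (c \<alpha>) * \<alpha> x else 0)"
    by (rule sum.cong) auto
  also have "\<dots> = (\<Sum>\<alpha>\<in>T \<inter> S. complex_of_real (c \<alpha>) * \<alpha> x)"
    using T by (simp add: sum.inter_restrict)
  also have "T \<inter> S = S" using ST by blast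
  finally show "(\<Sum>\<alpha>\<in>S. complex_of_real (c \<alpha>) * \<alpha> x) =
        (\<Sum>\<alpha>\<in>T. complex_of_real (if \<alpha> \<in> S then c \<alpha> else 0) * \<alpha> x)" by simp
qed

lemma rcomb_add: "(\<lambda>x. rcomb T c x + rcomb T d x) = rcomb T (\<lambda>\<alpha>. c \<alpha> + d \<alpha>)"
  by (simp add: rcomb_def sum.distrib distrib_right)

lemma rcomb_scale: "(\<lambda>x. complex_of_real r * rcomb T c x) = rcomb T (\<lambda>\<alpha>. r * c \<alpha>)"
  by (simp add: rcomb_def sum_distrib_left mult.assoc)

lemma rcomb_sum2:
  assumes "finite S" "finite T"
  shows "(\<lambda>x. rcomb S c x + rcomb T d x) =
    rcomb (S \<union> T) (\<lambda>\<alpha>. (if \<alpha> \<in> S then c \<alpha> else 0) + (if \<alpha> \<in> T then d \<alpha> else 0))"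
proof -
  have "rcomb S c = rcomb (S \<union> T) (\<lambda>\<alpha>. if \<alpha> \<in> S then c \<alpha> else 0)"
    using assms by (intro rcomb_ext) auto
  moreover have "rcomb T d = rcomb (S \<union> T) (\<lambda>\<alpha>. if \<alpha> \<in> T then d \<alpha> else 0)"
    using assms by (intro rcomb_ext) auto
  ultimately show ?thesis by (simp add: rcomb_add)
qed

lemma span_subspace: "real_subspace_fn (real_span A)"
  unfolding real_subspace_fn_def
proof (intro conjI ballI allI)
  show "(\<lambda>_. 0) \<in> real_span A"
  proof -
    have "(\<lambda>_. 0) = rcomb {} (\<lambda>_. 0)" by (simp add: rcomb_empty)
    then show ?thesis unfolding real_span_def by blast
  qed
next
  fix u w assume "u \<in> real_span A" "w \<in> real_span A"
  then obtain S c T d where "u = rcomb S c" "finite S" "S \<subseteq> A" "w = rcomb T d" "finite T" "T \<subseteq> A"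
    unfolding real_span_def by blast
  then show "(\<lambda>x. u x + w x) \<in> real_span A"
    unfolding real_span_def using rcomb_sum2[of S T c d] by auto
next
  fix r :: real and u assume "u \<in> real_span A"
  then obtain S c where "u = rcomb S c" "finite S" "S \<subseteq> A"
    unfolding real_span_def by blast
  then show "(\<lambda>x. complex_of_real r * u x) \<in> real_span A"
    unfolding real_span_def using rcomb_scale[of r S c] by auto
qed

lemma cone_cone: "cone_fn (real_cone A)"
  unfolding cone_fn_def
proof (intro conjI ballI allI impI)
  show "(\<lambda>_. 0) \<in> real_cone A"
  proof -
    have "(\<lambda>_. 0) = rcomb {} (\<lambda>_. 0)" by (simp add: rcomb_empty)
    then show ?thesis unfolding real_cone_def by blast
  qed
next
  fix u w assume "u \<in> real_cone A" "w \<in> real_cone A"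
  then obtain S c T d where h: "u = rcomb S c" "finite S" "S \<subseteq> A" "\<forall>\<alpha>\<in>S. c \<alpha> \<ge> 0"
     "w = rcomb T d" "finite T" "T \<subseteq> A" "\<forall>\<alpha>\<in>T. d \<alpha> \<ge> 0"
    unfolding real_cone_def by blast
  define e where "e = (\<lambda>\<alpha>. (if \<alpha> \<in> S then c \<alpha> else 0) + (if \<alpha> \<in> T then d \<alpha> else 0))"
  have "(\<lambda>x. u x + w x) = rcomb (S \<union> T) e" using rcomb_sum2[of S T c d] h by (simp add: e_def)
  moreover have "\<forall>\<alpha>\<in>S \<union> T. e \<alpha> \<ge> 0" using h by (auto simp: e_def)
  moreover have "finite (S \<union> T)" "S \<union> T \<subseteq> A" using h by auto
  ultimately show "(\<lambda>x. u x + w x) \<in> real_cone A"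
    unfolding real_cone_def by blast
next
  fix r :: real and u assume "r \<ge> 0" "u \<in> real_cone A"
  then obtain S c where "u = rcomb S c" "finite S" "S \<subseteq> A" "\<forall>\<alpha>\<in>S. c \<alpha> \<ge> 0"
    unfolding real_cone_def by blast
  then show "(\<lambda>x. complex_of_real r * u x) \<in> real_cone A"
    unfolding real_cone_def using rcomb_scale[of r S c] \<open>r \<ge> 0\<close>
    by (intro CollectI exI[of _ S] exI[of _ "\<lambda>\<alpha>. r * c \<alpha>"]) auto
qed

lemma rcomb_single: "rcomb {a} (\<lambda>_. 1) = a"
  by (simp add: rcomb_def)

lemma span_sub: "A \<subseteq> real_span A"
  unfolding real_span_def using rcomb_single by (metis (mono_tags, lifting) empty_subsetI finite.emptyI finite.insertI insert_subset mem_Collect_eq subsetI)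

lemma cone_sub: "A \<subseteq> real_cone A"
  unfolding real_cone_def using rcomb_single
  by (smt (verit, del_insts) empty_subsetI finite.emptyI finite.insertI insert_subset mem_Collect_eq singletonD subsetI)

lemma subspace_rcomb: "finite S \<Longrightarrow> real_subspace_fn V \<Longrightarrow> S \<subseteq> V \<Longrightarrow> rcomb S c \<in> V"
proof (induction S rule: finite_induct)
  case empty then show ?case by (simp add: rcomb_empty real_subspace_fn_def)
next
  case (insert a S)
  then show ?case by (simp add: rcomb_insert real_subspace_fn_def)
qed

lemma cone_in_span: "real_subspace_fn V \<Longrightarrow> A \<subseteq> V \<Longrightarrow> real_cone A \<subseteq> V"
  unfolding real_cone_def using subspace_rcomb by blast


definition pointed_fn :: "('g \<Rightarrow> complex) set \<Rightarrow> bool" where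
  "pointed_fn K \<longleftrightarrow> (\<forall>v\<in>K. (\<lambda>x. - v x) \<in> K \<longrightarrow> v = (\<lambda>_. 0))"

lemma pointedD: "pointed_fn K \<Longrightarrow> v \<in> K \<Longrightarrow> (\<lambda>x. - v x) \<in> K \<Longrightarrow> v = (\<lambda>_. 0)"
  unfolding pointed_fn_def by blast

lemma sub_zero: "real_subspace_fn E \<Longrightarrow> (\<lambda>_. 0) \<in> E"
  by (simp add: real_subspace_fn_def)
lemma sub_add: "real_subspace_fn E \<Longrightarrow> u \<in> E \<Longrightarrow> w \<in> E \<Longrightarrow> (\<lambda>x. u x + w x) \<in> E"
  by (simp add: real_subspace_fn_def)
lemma sub_scale: "real_subspace_fn E \<Longrightarrow> u \<in> E \<Longrightarrow> (\<lambda>x. complex_of_real r * u x) \<in> E"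
  by (simp add: real_subspace_fn_def)
lemma sub_neg: "real_subspace_fn E \<Longrightarrow> u \<in> E \<Longrightarrow> (\<lambda>x. - u x) \<in> E"
  using sub_scale[of E u "-1"] by simp
lemma sub_diff: "real_subspace_fn E \<Longrightarrow> u \<in> E \<Longrightarrow> w \<in> E \<Longrightarrow> (\<lambda>x. u x - w x) \<in> E"
  using sub_add[of E u "\<lambda>x. - w x"] sub_neg[of E w] by simp

lemma cone_zero: "cone_fn E \<Longrightarrow> (\<lambda>_. 0) \<in> E"
  by (simp add: cone_fn_def)
lemma cone_add: "cone_fn E \<Longrightarrow> u \<in> E \<Longrightarrow> w \<in> E \<Longrightarrow> (\<lambda>x. u x + w x) \<in> E"
  by (simp add: cone_fn_def)
lemma cone_scale: "cone_fn E \<Longrightarrow> r \<ge> 0 \<Longrightarrow> u \<in> E \<Longrightarrow> (\<lambda>x. complex_of_real r * u x) \<in> E"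
  by (simp add: cone_fn_def)

context
  fixes E :: "('g \<Rightarrow> complex) set" and le
  assumes lo: "real_linear_order E le"
begin

lemma lo_mem: "le a b \<Longrightarrow> a \<in> E \<and> b \<in> E"
  by (rule lo[unfolded real_linear_order_def, THEN conjunct1, rule_format]) auto
lemma lo_refl: "a \<in> E \<Longrightarrow> le a a"
  by (rule lo[unfolded real_linear_order_def, THEN conjunct2, THEN conjunct1, rule_format]) auto
lemma lo_antisym: "a \<in> E \<Longrightarrow> b \<in> E \<Longrightarrow> le a b \<Longrightarrow> le b a \<Longrightarrow> a = b"
  by (rule lo[unfolded real_linear_order_def, THEN conjunct2, THEN conjunct2, THEN conjunct1, rule_format]) auto
lemma lo_trans: "a \<in> E \<Longrightarrow> b \<in> E \<Longrightarrow> c \<in> E \<Longrightarrow> le a b \<Longrightarrow> le b c \<Longrightarrow> le a c"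
  by (rule lo[unfolded real_linear_order_def, THEN conjunct2, THEN conjunct2, THEN conjunct2, THEN conjunct1, rule_format]) auto
lemma lo_total: "a \<in> E \<Longrightarrow> b \<in> E \<Longrightarrow> le a b \<or> le b a"
  by (rule lo[unfolded real_linear_order_def, THEN conjunct2, THEN conjunct2, THEN conjunct2, THEN conjunct2, THEN conjunct1, rule_format]) auto
lemma lo_add: "a \<in> E \<Longrightarrow> b \<in> E \<Longrightarrow> c \<in> E \<Longrightarrow> le a b \<Longrightarrow> le (\<lambda>x. a x + c x) (\<lambda>x. b x + c x)"
  by (rule lo[unfolded real_linear_order_def, THEN conjunct2, THEN conjunct2, THEN conjunct2, THEN conjunct2, THEN conjunct2, THEN conjunct1, rule_format]) auto
lemma lo_pos: "a \<in> E \<Longrightarrow> b \<in> E \<Longrightarrow> r > 0 \<Longrightarrow> le a b \<Longrightarrow>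
   le (\<lambda>x. complex_of_real r * a x) (\<lambda>x. complex_of_real r * b x)"
  by (rule lo[unfolded real_linear_order_def, THEN conjunct2, THEN conjunct2, THEN conjunct2, THEN conjunct2, THEN conjunct2, THEN conjunct2, THEN conjunct1, rule_format]) auto
lemma lo_neg: "a \<in> E \<Longrightarrow> b \<in> E \<Longrightarrow> r < 0 \<Longrightarrow> le a b \<Longrightarrow>
   le (\<lambda>x. complex_of_real r * b x) (\<lambda>x. complex_of_real r * a x)"
  by (rule lo[unfolded real_linear_order_def, THEN conjunct2, THEN conjunct2, THEN conjunct2, THEN conjunct2, THEN conjunct2, THEN conjunct2, THEN conjunct2, rule_format]) auto

lemma lo_nonneg_rcomb:
  assumes E: "real_subspace_fn E" and A: "\<forall>a\<in>A. a \<in> E \<and> le (\<lambda>_. 0) a"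
  shows "finite S \<Longrightarrow> S \<subseteq> A \<Longrightarrow> (\<forall>\<alpha>\<in>S. c \<alpha> \<ge> 0) \<Longrightarrow> le (\<lambda>_. 0) (rcomb S c) \<and> rcomb S c \<in> E"
proof (induction S rule: finite_induct)
  case empty
  then show ?case using sub_zero[OF E] lo_refl[OF sub_zero[OF E]] by (simp add: rcomb_empty)
next
  case (insert a S)
  define s where "s = rcomb S c"
  define t where "t = (\<lambda>x. complex_of_real (c a) * a x)"
  have s: "le (\<lambda>_. 0) s" "s \<in> E" using insert by (auto simp: s_def)
  have aE: "a \<in> E" "le (\<lambda>_. 0) a" using insert A by auto
  have tE: "t \<in> E" unfolding t_def using sub_scale[OF E aE(1)] .
  have z: "(\<lambda>_. 0) \<in> E" using sub_zero[OF E] .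
  have t: "le (\<lambda>_. 0) t"
  proof (cases "c a = 0")
    case True
    then have "t = (\<lambda>_. 0)" by (simp add: t_def)
    then show ?thesis using lo_refl z by simp
  next
    case False
    then have "c a > 0" using insert by force
    from lo_pos[OF z aE(1) this aE(2)] show ?thesis by (simp add: t_def)
  qed
  have "le (\<lambda>x. 0 + s x) (\<lambda>x. t x + s x)" using lo_add[OF z tE s(2) t] .
  then have "le s (\<lambda>x. t x + s x)" by simp
  moreover have ts: "(\<lambda>x. t x + s x) \<in> E" using sub_add[OF E tE s(2)] .
  ultimately have "le (\<lambda>_. 0) (\<lambda>x. t x + s x)" using lo_trans[OF z s(2) ts s(1)] by blast
  moreover have "rcomb (insert a S) c = (\<lambda>x. t x + s x)"
    using insert by (simp add: rcomb_insert s_def t_def)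
  ultimately show ?case using ts by simp
qed

end

lemma part1:
  assumes lo: "real_linear_order (real_span (roots smul br H)) le"
  shows "triangular smul br H (pos_roots smul br H le) (neg_roots smul br H le)"
proof -
  define R where "R = roots smul br H"
  define E where "E = real_span R"
  have lo': "real_linear_order E le" using lo by (simp add: E_def R_def)
  have E: "real_subspace_fn E" unfolding E_def by (rule span_subspace)
  have RE: "R \<subseteq> E" unfolding E_def by (rule span_sub)
  have z: "(\<lambda>_. 0) \<in> E" using sub_zero[OF E] .
  have Rnz: "\<And>\<alpha>. \<alpha> \<in> R \<Longrightarrow> \<alpha> \<noteq> (\<lambda>_. 0)" unfolding R_def roots_def by blast
  define P where "P = pos_roots smul br H le"
  define N where "N = neg_roots smul br H le"
  have P: "P = {\<alpha> \<in> R. le (\<lambda>_. 0) \<alpha>}" unfolding P_def pos_roots_def R_def using Rnz R_def by blast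
  have N: "N = {\<alpha> \<in> R. le \<alpha> (\<lambda>_. 0)}" unfolding N_def neg_roots_def R_def using Rnz R_def by blast
  have un: "P \<union> N = R" using lo_total[OF lo', OF z] RE unfolding P N by blast
  have int: "P \<inter> N = {}" using lo_antisym[OF lo', OF z] RE Rnz unfolding P N by blast
  define A where "A = P \<union> (\<lambda>\<alpha> x. - \<alpha> x) ` N"
  have A: "\<forall>a\<in>A. a \<in> E \<and> le (\<lambda>_. 0) a"
  proof
    fix a assume "a \<in> A"
    then consider "a \<in> P" | \<alpha> where "\<alpha> \<in> N" "a = (\<lambda>x. - \<alpha> x)" unfolding A_def by blast
    then show "a \<in> E \<and> le (\<lambda>_. 0) a"
    proof cases
      case 1 then show ?thesis using RE P by auto
    next
      case 2
      then have \<alpha>: "\<alpha> \<in> E" "le \<alpha> (\<lambda>_. 0)" using N RE by auto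
      have m1: "(-1::real) < 0" by simp
      have "le (\<lambda>x. complex_of_real (-1) * 0) (\<lambda>x. complex_of_real (-1) * \<alpha> x)"
        by (rule lo_neg[OF lo', OF \<alpha>(1) z m1 \<alpha>(2)])
      then show ?thesis using 2 sub_neg[OF E \<alpha>(1)] by simp
    qed
  qed
  have cone: "\<forall>v\<in>real_cone A. le (\<lambda>_. 0) v \<and> v \<in> E"
    unfolding real_cone_def using lo_nonneg_rcomb[OF lo', OF E A] by blast
  have "\<forall>V. real_subspace_fn V \<and> V \<subseteq> real_cone A \<longrightarrow> V \<subseteq> {\<lambda>_. 0}"
  proof (intro allI impI subsetI)
    fix V v assume V: "real_subspace_fn V \<and> V \<subseteq> real_cone A" and v: "v \<in> V"
    have nv: "(\<lambda>x. - v x) \<in> V" using sub_neg[of V v] V v by blast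
    have v1: "le (\<lambda>_. 0) v" "v \<in> E" using cone V v by auto
    have v2: "le (\<lambda>_. 0) (\<lambda>x. - v x)" "(\<lambda>x. - v x) \<in> E" using cone V nv by auto
    have m1: "(-1::real) < 0" by simp
    have "le (\<lambda>x. complex_of_real (-1) * v x) (\<lambda>x. complex_of_real (-1) * 0)"
      by (rule lo_neg[OF lo', OF z v1(2) m1 v1(1)])
    then have "le (\<lambda>x. - v x) (\<lambda>_. 0)" by simp
    then have "(\<lambda>x. - v x) = (\<lambda>_. 0)" using lo_antisym[OF lo', OF v2(2) z] v2(1) by blast
    then have "v = (\<lambda>_. 0)" by (simp add: fun_eq_iff)
    then show "v \<in> {\<lambda>_. 0}" by simp
  qed
  then show ?thesis unfolding triangular_def using un int
    by (simp add: A_def P_def N_def R_def)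
qed


lemma pointed_cone:
  assumes C: "cone_fn C" and tri: "\<forall>V. real_subspace_fn V \<and> V \<subseteq> C \<longrightarrow> V \<subseteq> {\<lambda>_. 0}"
  shows "pointed_fn C"
  unfolding pointed_fn_def
proof (intro ballI impI)
  fix v assume v: "v \<in> C" and nv: "(\<lambda>x. - v x) \<in> C"
  define V where "V = {(\<lambda>x. complex_of_real r * v x) | r. True}"
  have "real_subspace_fn V"
    unfolding real_subspace_fn_def
  proof (intro conjI ballI allI)
    show "(\<lambda>_. 0) \<in> V" unfolding V_def by (rule CollectI, rule exI[of _ 0]) simp
  next
    fix u w assume "u \<in> V" "w \<in> V"
    then obtain r1 r2 where "u = (\<lambda>x. complex_of_real r1 * v x)" "w = (\<lambda>x. complex_of_real r2 * v x)"
      unfolding V_def by blast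
    then show "(\<lambda>x. u x + w x) \<in> V" unfolding V_def
      by (intro CollectI exI[of _ "r1 + r2"]) (simp add: fun_eq_iff distrib_right)
  next
    fix r :: real and u assume "u \<in> V"
    then obtain r1 where "u = (\<lambda>x. complex_of_real r1 * v x)"
      unfolding V_def by blast
    then show "(\<lambda>x. complex_of_real r * u x) \<in> V" unfolding V_def
      by (intro CollectI exI[of _ "r * r1"]) (simp add: fun_eq_iff mult.assoc)
  qed
  moreover have "V \<subseteq> C"
  proof
    fix u assume "u \<in> V"
    then obtain r where u: "u = (\<lambda>x. complex_of_real r * v x)" unfolding V_def by blast
    show "u \<in> C"
    proof (cases "r \<ge> 0")
      case True then show ?thesis using cone_scale[OF C True v] u by simp
    next
      case False
      then have "-r \<ge> 0" by simp
      from cone_scale[OF C this nv] have "(\<lambda>x. complex_of_real (-r) * - v x) \<in> C" .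
      then show ?thesis using u by simp
    qed
  qed
  ultimately have "V \<subseteq> {\<lambda>_. 0}" using tri by blast
  moreover have "v \<in> V" unfolding V_def by (rule CollectI, rule exI[of _ 1]) simp
  ultimately show "v = (\<lambda>_. 0)" by blast
qed

lemma maximal_total:
  assumes E: "real_subspace_fn E" and MA: "M \<in> \<A>"
    and Adef: "\<A> = {K. C \<subseteq> K \<and> K \<subseteq> E \<and> cone_fn K \<and> pointed_fn K}"
    and max: "\<forall>X\<in>\<A>. M \<subseteq> X \<longrightarrow> X = M"
    and v: "v \<in> E"
  shows "v \<in> M \<or> (\<lambda>x. - v x) \<in> M"
proof (rule ccontr)
  assume nv: "\<not> (v \<in> M \<or> (\<lambda>x. - v x) \<in> M)"
  have M: "C \<subseteq> M" "M \<subseteq> E" "cone_fn M" "pointed_fn M" using MA Adef by auto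
  define M' where "M' = {(\<lambda>x. m x + complex_of_real a * v x) | m a. m \<in> M \<and> a \<ge> 0}"
  have MM': "M \<subseteq> M'"
  proof
    fix m assume "m \<in> M"
    then show "m \<in> M'" unfolding M'_def by (intro CollectI exI[of _ m] exI[of _ 0]) simp
  qed
  have "M' \<subseteq> E"
  proof
    fix u assume "u \<in> M'"
    then obtain m a where "u = (\<lambda>x. m x + complex_of_real a * v x)" "m \<in> M" unfolding M'_def by blast
    then show "u \<in> E" using sub_add[OF E _ sub_scale[OF E v]] M(2) by blast
  qed
  moreover have "cone_fn M'"
    unfolding cone_fn_def
  proof (intro conjI ballI allI impI)
    show "(\<lambda>_. 0) \<in> M'" unfolding M'_def
      using cone_zero[OF M(3)] by (intro CollectI exI[of _ "\<lambda>_. 0"] exI[of _ 0]) simp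
  next
    fix u w assume "u \<in> M'" "w \<in> M'"
    then obtain m1 a1 m2 a2 where "u = (\<lambda>x. m1 x + complex_of_real a1 * v x)" "m1 \<in> M" "a1 \<ge> 0"
       "w = (\<lambda>x. m2 x + complex_of_real a2 * v x)" "m2 \<in> M" "a2 \<ge> 0" unfolding M'_def by blast
    then show "(\<lambda>x. u x + w x) \<in> M'" unfolding M'_def
      using cone_add[OF M(3)]
      by (intro CollectI exI[of _ "\<lambda>x. m1 x + m2 x"] exI[of _ "a1 + a2"]) (simp add: algebra_simps)
  next
    fix r :: real and u assume r: "r \<ge> 0" and "u \<in> M'"
    then obtain m a where ma: "u = (\<lambda>x. m x + complex_of_real a * v x)" "m \<in> M" "a \<ge> 0" unfolding M'_def by blast
    have "(\<lambda>x. complex_of_real r * m x) \<in> M" using cone_scale[OF M(3) r ma(2)] .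
    then show "(\<lambda>x. complex_of_real r * u x) \<in> M'" unfolding M'_def
      using ma r
      by (intro CollectI exI[of _ "\<lambda>x. complex_of_real r * m x"] exI[of _ "r * a"]) (simp add: algebra_simps)
  qed
  moreover have "pointed_fn M'"
    unfolding pointed_fn_def
  proof (intro ballI impI)
    fix w assume "w \<in> M'" "(\<lambda>x. - w x) \<in> M'"
    then obtain m1 a m2 b where w1: "w = (\<lambda>x. m1 x + complex_of_real a * v x)" and m1: "m1 \<in> M" "a \<ge> 0"
       and w2: "(\<lambda>x. - w x) = (\<lambda>x. m2 x + complex_of_real b * v x)" and m2: "m2 \<in> M" "b \<ge> 0"
      unfolding M'_def by blast
    have eq: "\<And>x. m1 x + m2 x = - complex_of_real (a + b) * v x"
    proof -
      fix x
      have h: "- (m1 x + complex_of_real a * v x) = m2 x + complex_of_real b * v x"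
        using fun_cong[OF w2, of x] w1 by simp
      show "m1 x + m2 x = - complex_of_real (a + b) * v x" unfolding of_real_add using h by algebra
    qed
    show "w = (\<lambda>_. 0)"
    proof (cases "a + b = 0")
      case True
      then have ab: "a = 0" "b = 0" using m1 m2 by auto
      then have "w = m1" "(\<lambda>x. - w x) = m2" using w1 w2 by auto
      then show ?thesis using pointedD[OF M(4), of w] m1(1) m2(1) by simp
    next
      case False
      then have pos: "a + b > 0" using m1 m2 by auto
      have "(\<lambda>x. complex_of_real (1 / (a + b)) * (m1 x + m2 x)) \<in> M"
        using cone_scale[OF M(3) _ cone_add[OF M(3) m1(1) m2(1)], of "1 / (a + b)"] pos by (simp only: divide_nonneg_pos zero_le_one order.strict_implies_order zero_less_one)
      moreover have "(\<lambda>x. complex_of_real (1 / (a + b)) * (m1 x + m2 x)) = (\<lambda>x. - v x)"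
      proof
        fix x
        have nz: "complex_of_real (a + b) \<noteq> 0" using pos by (metis of_real_eq_0_iff less_irrefl)
        have "complex_of_real (1 / (a + b)) * (m1 x + m2 x)
            = complex_of_real (1 / (a + b)) * (- complex_of_real (a + b) * v x)" by (simp add: eq)
        also have "\<dots> = - v x" using nz by (simp add: field_simps)
        finally show "complex_of_real (1 / (a + b)) * (m1 x + m2 x) = - v x" .
      qed
      ultimately show ?thesis using nv by simp
    qed
  qed
  ultimately have "M' \<in> \<A>" using Adef M(1) MM' by auto
  then have "M' = M" using max MM' by blast
  moreover have "v \<in> M'" unfolding M'_def
    using cone_zero[OF M(3)] by (intro CollectI exI[of _ "\<lambda>_. 0"] exI[of _ 1]) simp
  ultimately show False using nv by simp
qed


lemma part2:
  assumes tri: "triangular smul br H P N"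
  shows "\<exists>le. real_linear_order (real_span (roots smul br H)) le \<and> pos_roots smul br H le = P"
proof -
  define R where "R = roots smul br H"
  define E where "E = real_span R"
  have E: "real_subspace_fn E" unfolding E_def by (rule span_subspace)
  have RE: "R \<subseteq> E" unfolding E_def by (rule span_sub)
  have Rnz: "\<And>\<alpha>. \<alpha> \<in> R \<Longrightarrow> \<alpha> \<noteq> (\<lambda>_. 0)" unfolding R_def roots_def by blast
  have un: "P \<union> N = R" and int: "P \<inter> N = {}"
    and cn: "\<forall>V. real_subspace_fn V \<and> V \<subseteq> real_cone (P \<union> (\<lambda>\<alpha> x. - \<alpha> x) ` N) \<longrightarrow> V \<subseteq> {\<lambda>_. 0}"
    using tri unfolding triangular_def R_def by auto
  define C where "C = real_cone (P \<union> (\<lambda>\<alpha> x. - \<alpha> x) ` N)"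
  have AE: "P \<union> (\<lambda>\<alpha> x. - \<alpha> x) ` N \<subseteq> E" using un RE sub_neg[OF E] by blast
  have CE: "C \<subseteq> E" unfolding C_def by (rule cone_in_span[OF E AE])
  have Cc: "cone_fn C" unfolding C_def by (rule cone_cone)
  have Cp: "pointed_fn C" unfolding C_def by (rule pointed_cone[OF cone_cone cn])
  have sub: "P \<union> (\<lambda>\<alpha> x. - \<alpha> x) ` N \<subseteq> C" unfolding C_def by (rule cone_sub)
  have PC: "P \<subseteq> C" using sub by (rule subset_trans[OF Un_upper1])
  have NC: "(\<lambda>\<alpha> x. - \<alpha> x) ` N \<subseteq> C" using sub by (rule subset_trans[OF Un_upper2])
  define \<A> where "\<A> = {K. C \<subseteq> K \<and> K \<subseteq> E \<and> cone_fn K \<and> pointed_fn K}"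
  have "\<exists>M\<in>\<A>. \<forall>X\<in>\<A>. M \<subseteq> X \<longrightarrow> X = M"
  proof (rule subset_Zorn_nonempty)
    show "\<A> \<noteq> {}" using CE Cc Cp unfolding \<A>_def by blast
  next
    fix \<C> assume ne: "\<C> \<noteq> {}" and ch: "subset.chain \<A> \<C>"
    have sub: "\<C> \<subseteq> \<A>" and cmp: "\<And>X Y. X \<in> \<C> \<Longrightarrow> Y \<in> \<C> \<Longrightarrow> X \<subseteq> Y \<or> Y \<subseteq> X"
      using ch unfolding subset.chain_def by blast+
    have mem: "\<And>K. K \<in> \<C> \<Longrightarrow> C \<subseteq> K \<and> K \<subseteq> E \<and> cone_fn K \<and> pointed_fn K"
      using sub unfolding \<A>_def by blast
    obtain K0 where K0: "K0 \<in> \<C>" using ne by blast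
    have "C \<subseteq> \<Union>\<C>" using mem[OF K0] K0 by blast
    moreover have "\<Union>\<C> \<subseteq> E" using mem by blast
    moreover have "cone_fn (\<Union>\<C>)"
      unfolding cone_fn_def
    proof (intro conjI ballI allI impI)
      show "(\<lambda>_. 0) \<in> \<Union>\<C>" using K0 mem[OF K0] cone_zero by blast
    next
      fix u w assume "u \<in> \<Union>\<C>" "w \<in> \<Union>\<C>"
      then obtain K1 K2 where "K1 \<in> \<C>" "K2 \<in> \<C>" "u \<in> K1" "w \<in> K2" by blast
      then show "(\<lambda>x. u x + w x) \<in> \<Union>\<C>"
        using cmp[of K1 K2] mem cone_add by (metis UnionI subsetD)
    next
      fix r :: real and u assume "r \<ge> 0" "u \<in> \<Union>\<C>"
      then show "(\<lambda>x. complex_of_real r * u x) \<in> \<Union>\<C>"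
        using mem cone_scale by blast
    qed
    moreover have "pointed_fn (\<Union>\<C>)"
      unfolding pointed_fn_def
    proof (intro ballI impI)
      fix v assume "v \<in> \<Union>\<C>" "(\<lambda>x. - v x) \<in> \<Union>\<C>"
      then obtain K1 K2 where "K1 \<in> \<C>" "K2 \<in> \<C>" "v \<in> K1" "(\<lambda>x. - v x) \<in> K2" by blast
      then show "v = (\<lambda>_. 0)"
      proof -
        have pk: "\<And>K. K \<in> \<C> \<Longrightarrow> pointed_fn K" using mem by blast
        show ?thesis using cmp[of K1 K2] pointedD[OF pk[OF \<open>K2 \<in> \<C>\<close>], of v]
          pointedD[OF pk[OF \<open>K1 \<in> \<C>\<close>], of v] \<open>v \<in> K1\<close> \<open>(\<lambda>x. - v x) \<in> K2\<close> \<open>K1 \<in> \<C>\<close> \<open>K2 \<in> \<C>\<close> by blast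
      qed
    qed
    ultimately show "\<Union>\<C> \<in> \<A>" unfolding \<A>_def by blast
  qed
  then obtain M where MA: "M \<in> \<A>" and max: "\<forall>X\<in>\<A>. M \<subseteq> X \<longrightarrow> X = M" by blast
  have M: "C \<subseteq> M" "M \<subseteq> E" "cone_fn M" "pointed_fn M" using MA unfolding \<A>_def by auto
  have tot: "\<And>v. v \<in> E \<Longrightarrow> v \<in> M \<or> (\<lambda>x. - v x) \<in> M"
    using maximal_total[OF E MA \<A>_def max] by blast
  define le where "le = (\<lambda>a b. a \<in> E \<and> b \<in> E \<and> (\<lambda>x. b x - a x) \<in> M)"
  have z: "(\<lambda>_. 0) \<in> M" using cone_zero[OF M(3)] .
  have lo: "real_linear_order E le"
    unfolding real_linear_order_def
  proof (intro conjI ballI allI impI)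
    fix a b assume "le a b" then show "a \<in> E" "b \<in> E" unfolding le_def by auto
  next
    fix a assume "a \<in> E" then show "le a a" unfolding le_def using z by simp
  next
    fix a b assume ab: "a \<in> E" "b \<in> E" and h: "le a b \<and> le b a"
    then have "(\<lambda>x. b x - a x) \<in> M" "(\<lambda>x. - (b x - a x)) \<in> M" unfolding le_def by auto
    then have "(\<lambda>x. b x - a x) = (\<lambda>_. 0)" using pointedD[OF M(4), of "\<lambda>x. b x - a x"] by blast
    then show "a = b" by (simp add: fun_eq_iff)
  next
    fix a b c assume abc: "a \<in> E" "b \<in> E" "c \<in> E" and h: "le a b \<and> le b c"
    then have "(\<lambda>x. (c x - b x) + (b x - a x)) \<in> M" unfolding le_def using cone_add[OF M(3)] by blast
    then show "le a c" using abc unfolding le_def by simp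
  next
    fix a b assume ab: "a \<in> E" "b \<in> E"
    have "(\<lambda>x. b x - a x) \<in> E" using sub_diff[OF E ab(2) ab(1)] .
    from tot[OF this] show "le a b \<or> le b a" using ab unfolding le_def by simp
  next
    fix a b c assume abc: "a \<in> E" "b \<in> E" "c \<in> E" and h: "le a b"
    then show "le (\<lambda>x. a x + c x) (\<lambda>x. b x + c x)" unfolding le_def
      using sub_add[OF E] by simp
  next
    fix a b and r :: real assume ab: "a \<in> E" "b \<in> E" and h: "0 < r \<and> le a b"
    then have "(\<lambda>x. complex_of_real r * (b x - a x)) \<in> M" unfolding le_def
      using cone_scale[OF M(3)] by simp
    then show "le (\<lambda>x. complex_of_real r * a x) (\<lambda>x. complex_of_real r * b x)" unfolding le_def
      using sub_scale[OF E ab(1), of r] sub_scale[OF E ab(2), of r] by (simp add: algebra_simps)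
  next
    fix a b and r :: real assume ab: "a \<in> E" "b \<in> E" and h: "r < 0 \<and> le a b"
    have r0: "- r \<ge> 0" using h by simp
    have bm: "(\<lambda>x. b x - a x) \<in> M" using h unfolding le_def by blast
    have "(\<lambda>x. complex_of_real (- r) * (b x - a x)) \<in> M"
      using cone_scale[OF M(3) r0 bm] .
    then show "le (\<lambda>x. complex_of_real r * b x) (\<lambda>x. complex_of_real r * a x)" unfolding le_def
      using sub_scale[OF E ab(1), of r] sub_scale[OF E ab(2), of r] by (simp add: algebra_simps)
  qed
  have "pos_roots smul br H le = {\<alpha> \<in> R. \<alpha> \<in> M}"
    unfolding pos_roots_def le_def R_def[symmetric] using RE Rnz sub_zero[OF E] by auto
  also have "\<dots> = P"
  proof
    show "P \<subseteq> {\<alpha> \<in> R. \<alpha> \<in> M}" using un PC M(1) by blast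
  next
    show "{\<alpha> \<in> R. \<alpha> \<in> M} \<subseteq> P"
    proof
      fix \<alpha> assume a: "\<alpha> \<in> {\<alpha> \<in> R. \<alpha> \<in> M}"
      show "\<alpha> \<in> P"
      proof (rule ccontr)
        assume "\<alpha> \<notin> P"
        then have "\<alpha> \<in> N" using a un by blast
        then have "(\<lambda>x. - \<alpha> x) \<in> M" using NC M(1) by blast
        then have "\<alpha> = (\<lambda>_. 0)" using a pointedD[OF M(4), of \<alpha>] by blast
        then show False using a Rnz by blast
      qed
    qed
  qed
  finally show ?thesis using lo unfolding E_def R_def by blast
qed

theorem proposition9:
  fixes smul :: "complex \<Rightarrow> 'g::ab_group_add \<Rightarrow> 'g"
    and br :: "'g \<Rightarrow> 'g \<Rightarrow> 'g"
    and H :: "'g set"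
  assumes "lie_algebra smul br"
    and "cartan_subalgebra smul br H"
    and "root_decomposition smul br H"
  shows "(\<forall>le. real_linear_order (real_span (roots smul br H)) le \<longrightarrow>
            triangular smul br H (pos_roots smul br H le) (neg_roots smul br H le)
            \<and> borel_subalgebra smul br H (borel_of smul br H (pos_roots smul br H le)))
       \<and> (\<forall>B. borel_subalgebra smul br H B \<longrightarrow>
            (\<exists>le. real_linear_order (real_span (roots smul br H)) le
                  \<and> B = borel_of smul br H (pos_roots smul br H le)))"
proof (intro conjI allI impI)
  fix le assume lo: "real_linear_order (real_span (roots smul br H)) le"
  show "triangular smul br H (pos_roots smul br H le) (neg_roots smul br H le)"
    using part1[OF lo] .
  then show "borel_subalgebra smul br H (borel_of smul br H (pos_roots smul br H le))"
    unfolding borel_subalgebra_def by blast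
next
  fix B assume "borel_subalgebra smul br H B"
  then obtain P N where tri: "triangular smul br H P N" and B: "B = borel_of smul br H P"
    unfolding borel_subalgebra_def by blast
  from part2[OF tri] obtain le where "real_linear_order (real_span (roots smul br H)) le"
    "pos_roots smul br H le = P" by blast
  then show "\<exists>le. real_linear_order (real_span (roots smul br H)) le
                  \<and> B = borel_of smul br H (pos_roots smul br H le)" using B by blast
qed

end
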